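(* Let $R$ be a ring with identity and $a\in R$. Then: (i) there exists a positive integer $n$ such that $a$ is left $(a^n,1)$-invertible if and only if $a$ is left $\pi$-regular; (ii) there exists a positive integer $n$ such that $a$ is right $(1,a^n)$-invertible if and only if $a$ is right $\pi$-regular; (iii) $a$ is strongly $\pi$-regular (equivalently, Drazin invertible) if and only if there exists a positive integer $n$ such that $a$ is left $(a^n,1)$-invertible and right $(1,a^n)$-invertible.
   Context: For $x\in R$: $xR=\{xr:r\in R\}$, $Rx=\{rx:r\in R\}$. For $a,b,c\in R$, $a$ is left $(b,c)$-invertible if there is $y$ with $Ry\subseteq Rc$ and $yab=b$; right $(b,c)$-invertible if there is $y$ with $yR\subseteq bR$ and $cay=c$. The element $a$ is left (resp. right) $\pi$-regular if there exist $x\in R$ and a positive integer $n$ with $a^n=xa^{n+1}$ (resp. $a^n=a^{n+1}x$); it is strongly $\pi$-regular if it is both left and right $\pi$-regular. *)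

theory Defs
  imports Main
begin

definition left_bc_invertible :: "'a::ring_1 \<Rightarrow> 'a \<Rightarrow> 'a \<Rightarrow> bool" where
  "left_bc_invertible a b c \<longleftrightarrow>
     (\<exists>y. {r * y | r. True} \<subseteq> {r * c | r. True} \<and> y * a * b = b)"

definition right_bc_invertible :: "'a::ring_1 \<Rightarrow> 'a \<Rightarrow> 'a \<Rightarrow> bool" where
  "right_bc_invertible a b c \<longleftrightarrow>
     (\<exists>y. {y * r | r. True} \<subseteq> {b * r | r. True} \<and> c * a * y = c)"

definition left_pi_regular :: "'a::ring_1 \<Rightarrow> bool" where
  "left_pi_regular a \<longleftrightarrow> (\<exists>x. \<exists>n::nat. n > 0 \<and> a ^ n = x * a ^ (n + 1))"

definition right_pi_regular :: "'a::ring_1 \<Rightarrow> bool" where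
  "right_pi_regular a \<longleftrightarrow> (\<exists>x. \<exists>n::nat. n > 0 \<and> a ^ n = a ^ (n + 1) * x)"

definition strongly_pi_regular :: "'a::ring_1 \<Rightarrow> bool" where
  "strongly_pi_regular a \<longleftrightarrow> left_pi_regular a \<and> right_pi_regular a"

end

theory Submission
  imports Defs
begin

lemma L: "left_bc_invertible a (a ^ n) 1 \<longleftrightarrow> (\<exists>x. a ^ n = x * (a::'a::ring_1) ^ (n + 1))"
proof
  assume "left_bc_invertible a (a ^ n) 1"
  then obtain y where "y * a * a ^ n = a ^ n" unfolding left_bc_invertible_def by blast
  then have "a ^ n = y * a ^ (n + 1)" by (simp add: mult.assoc)
  then show "\<exists>x. a ^ n = x * a ^ (n + 1)" ..
next
  assume "\<exists>x. a ^ n = x * a ^ (n + 1)"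
  then obtain y where h: "a ^ n = y * a ^ (n + 1)" ..
  have "y * a * a ^ n = a ^ n" using h by (simp add: mult.assoc)
  moreover have "{r * y | r. True} \<subseteq> {r * 1 | r. True}" by auto
  ultimately show "left_bc_invertible a (a ^ n) 1" unfolding left_bc_invertible_def by blast
qed
lemma R: "right_bc_invertible a 1 (a ^ n) \<longleftrightarrow> (\<exists>x. a ^ n = (a::'a::ring_1) ^ (n + 1) * x)"
proof
  assume "right_bc_invertible a 1 (a ^ n)"
  then obtain y where "a ^ n * a * y = a ^ n" unfolding right_bc_invertible_def by blast
  then have "a ^ n = a ^ (n + 1) * y" by (metis Suc_eq_plus1 power_Suc2)
  then show "\<exists>x. a ^ n = a ^ (n + 1) * x" ..
next
  assume "\<exists>x. a ^ n = a ^ (n + 1) * x"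
  then obtain y where h: "a ^ n = a ^ (n + 1) * y" ..
  have "a ^ n * a * y = a ^ n" using h by (metis Suc_eq_plus1 power_Suc2)
  moreover have "{y * r | r. True} \<subseteq> {1 * r | r. True}" by auto
  ultimately show "right_bc_invertible a 1 (a ^ n)" unfolding right_bc_invertible_def by blast
qed

lemma Lmono: "(a::'a::ring_1) ^ n = x * a ^ (n + 1) \<Longrightarrow> n \<le> m \<Longrightarrow> a ^ m = x * a ^ (m + 1)"
proof -
  assume h: "a ^ n = x * a ^ (n + 1)" and "n \<le> m"
  have "a ^ (n + k) = x * a ^ (n + k + 1)" for k
  proof (induction k)
    case 0 then show ?case using h by simp
  next
    case (Suc k)
    have "a ^ (n + Suc k) = a ^ (n + k) * a" by (metis add_Suc_right power_Suc2)
    also have "\<dots> = x * (a ^ (n + k + 1) * a)" using Suc by (metis mult.assoc)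
    also have "\<dots> = x * a ^ (n + Suc k + 1)" by (metis add_Suc_right Suc_eq_plus1 power_Suc2)
    finally show ?case .
  qed
  from this[of "m - n"] \<open>n \<le> m\<close> show ?thesis by simp
qed
lemma Rmono: "(a::'a::ring_1) ^ n = a ^ (n + 1) * x \<Longrightarrow> n \<le> m \<Longrightarrow> a ^ m = a ^ (m + 1) * x"
proof -
  assume h: "a ^ n = a ^ (n + 1) * x" and "n \<le> m"
  have "a ^ (k + n) = a ^ (k + n + 1) * x" for k
  proof (induction k)
    case 0 then show ?case using h by simp
  next
    case (Suc k)
    have "a ^ (Suc k + n) = a * a ^ (k + n)" by simp
    also have "\<dots> = (a * a ^ (k + n + 1)) * x" using Suc by (metis mult.assoc)
    also have "\<dots> = a ^ (Suc k + n + 1) * x" by simp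
    finally show ?case .
  qed
  from this[of "m - n"] \<open>n \<le> m\<close> show ?thesis by simp
qed

theorem proposition2p18:
  fixes a :: "'a::ring_1"
  shows "((\<exists>n::nat. n > 0 \<and> left_bc_invertible a (a ^ n) 1) \<longleftrightarrow> left_pi_regular a)
       \<and> ((\<exists>n::nat. n > 0 \<and> right_bc_invertible a 1 (a ^ n)) \<longleftrightarrow> right_pi_regular a)
       \<and> (strongly_pi_regular a \<longleftrightarrow>
            (\<exists>n::nat. n > 0 \<and> left_bc_invertible a (a ^ n) 1 \<and> right_bc_invertible a 1 (a ^ n)))"
proof (intro conjI)
  show "(\<exists>n::nat. n > 0 \<and> left_bc_invertible a (a ^ n) 1) \<longleftrightarrow> left_pi_regular a"
    unfolding L left_pi_regular_def by blast
  show "(\<exists>n::nat. n > 0 \<and> right_bc_invertible a 1 (a ^ n)) \<longleftrightarrow> right_pi_regular a"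
    unfolding R right_pi_regular_def by blast
  show "strongly_pi_regular a \<longleftrightarrow>
            (\<exists>n::nat. n > 0 \<and> left_bc_invertible a (a ^ n) 1 \<and> right_bc_invertible a 1 (a ^ n))"
  proof
    assume "strongly_pi_regular a"
    then obtain x n y m where "n > 0" "a ^ n = x * a ^ (n + 1)" "m > 0" "a ^ m = a ^ (m + 1) * y"
      unfolding strongly_pi_regular_def left_pi_regular_def right_pi_regular_def by blast
    note hs = this
    have h1: "a ^ max n m = x * a ^ (max n m + 1)"
      by (rule Lmono[OF hs(2)]) simp
    have h2: "a ^ max n m = a ^ (max n m + 1) * y"
      by (rule Rmono[OF hs(4)]) simp
    have "max n m > 0" using hs(1) by simp
    then show "\<exists>n::nat. n > 0 \<and> left_bc_invertible a (a ^ n) 1 \<and> right_bc_invertible a 1 (a ^ n)"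
      unfolding L R using h1 h2 \<open>max n m > 0\<close> by blast
  next
    assume "\<exists>n::nat. n > 0 \<and> left_bc_invertible a (a ^ n) 1 \<and> right_bc_invertible a 1 (a ^ n)"
    then obtain n x y where "n > 0" "a ^ n = x * a ^ (n + 1)" "a ^ n = a ^ (n + 1) * y"
      unfolding L R by blast
    then show "strongly_pi_regular a"
      unfolding strongly_pi_regular_def left_pi_regular_def right_pi_regular_def by blast
  qed
qed

end
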